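(* Suppose $(Y,X)$ is a random vector in $\mathbb{R}^{d+1}$ with continuous marginals and a Gaussian copula having a non-singular covariance matrix. Then $\lambda^{(\mathrm{opt})}(Y,X)=0$.
   Context: $F_\xi$ is the CDF of $\xi$ and $F_\xi^{\leftarrow}(p)=\inf\{y:F_\xi(y)\ge p\}$. For $p\in(0,1)$, $\mathcal{C}_p(X)$ is the class of Borel functions $g$ with $\mathbb{P}[g(X)>F_{g(X)}^{\leftarrow}(p)]=1-p$. The optimal extremal precision is \[ \lambda^{(\mathrm{opt})}(Y,X)=\limsup_{p\uparrow1}\sup_{g\in\mathcal{C}_p(X)}\mathbb{P}\big(Y>F_Y^{\leftarrow}(p)\mid g(X)>F_{g(X)}^{\leftarrow}(p)\big). \] *)

theory Defs
  imports "HOL-Probability.Probability"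
begin

definition cdf_rv :: "'a measure \<Rightarrow> ('a \<Rightarrow> real) \<Rightarrow> real \<Rightarrow> real" where
  "cdf_rv M \<xi> t = measure M {\<omega> \<in> space M. \<xi> \<omega> \<le> t}"

definition gen_inv :: "(real \<Rightarrow> real) \<Rightarrow> real \<Rightarrow> real" where
  "gen_inv F p = Inf {y. p \<le> F y}"

definition std_normal_cdf :: "real \<Rightarrow> real" where
  "std_normal_cdf x = measure (density lborel std_normal_density) {..x}"

definition correlation_matrix :: "real ^'n ^'n \<Rightarrow> bool" where
  "correlation_matrix R \<longleftrightarrow> transpose R = R \<and> (\<forall>v. 0 \<le> v \<bullet> (R *v v)) \<and> (\<forall>i. R $ i $ i = 1)"

definition mvn_density :: "real ^'n ^'n \<Rightarrow> real ^'n \<Rightarrow> real" where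
  "mvn_density R w = exp (- (w \<bullet> (matrix_inv R *v w)) / 2) / sqrt ((2 * pi) ^ CARD('n) * det R)"

definition gaussian_copula :: "real ^'n ^'n \<Rightarrow> real ^'n \<Rightarrow> real" where
  "gaussian_copula R u = measure (density lborel (mvn_density R)) {w. \<forall>i. std_normal_cdf (w $ i) \<le> u $ i}"

text \<open>(Y,X) has the Gaussian copula with correlation matrix R; the coordinate None is Y,
  the coordinate Some i is the i-th component of X.\<close>
definition has_gaussian_copula ::
  "'a measure \<Rightarrow> ('a \<Rightarrow> real) \<Rightarrow> ('a \<Rightarrow> real ^'d) \<Rightarrow> real ^('d option) ^('d option) \<Rightarrow> bool" where
  "has_gaussian_copula M Y X R \<longleftrightarrow>
     (\<forall>y x. measure M {\<omega> \<in> space M. Y \<omega> \<le> y \<and> (\<forall>i. X \<omega> $ i \<le> x $ i)} =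
        gaussian_copula R (\<chi> j. case j of None \<Rightarrow> cdf_rv M Y y
                                        | Some i \<Rightarrow> cdf_rv M (\<lambda>\<omega>. X \<omega> $ i) (x $ i)))"

definition class_C :: "'a measure \<Rightarrow> ('a \<Rightarrow> 'b::topological_space) \<Rightarrow> real \<Rightarrow> ('b \<Rightarrow> real) set" where
  "class_C M X p = {g. g \<in> borel_measurable borel \<and>
     measure M {\<omega> \<in> space M. g (X \<omega>) > gen_inv (cdf_rv M (\<lambda>\<omega>. g (X \<omega>))) p} = 1 - p}"

definition cond_prob :: "'a measure \<Rightarrow> 'a set \<Rightarrow> 'a set \<Rightarrow> real" where
  "cond_prob M A B = measure M (A \<inter> B) / measure M B"

definition lambda_opt :: "'a measure \<Rightarrow> ('a \<Rightarrow> real) \<Rightarrow> ('a \<Rightarrow> 'b::topological_space) \<Rightarrow> ereal" where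
  "lambda_opt M Y X = Limsup (at_left (1::real)) (\<lambda>p.
     SUP g \<in> class_C M X p. ereal (cond_prob M
        {\<omega> \<in> space M. Y \<omega> > gen_inv (cdf_rv M Y) p}
        {\<omega> \<in> space M. g (X \<omega>) > gen_inv (cdf_rv M (\<lambda>\<omega>. g (X \<omega>))) p}))"

end

theory Submission
  imports Defs "HOL-Real_Asymp.Real_Asymp"
begin


abbreviation "Nd \<equiv> density lborel std_normal_density"

lemma Nd_prob: "prob_space Nd"
  using prob_space_normal_density[of 1 0] by simp

lemma Nd_rd: "real_distribution Nd"
  using Nd_prob by (auto simp: real_distribution_def real_distribution_axioms_def)

lemma Phi_cdf: "std_normal_cdf = cdf Nd"
  by (auto simp: std_normal_cdf_def cdf_def)

lemma Nd_fbm: "finite_borel_measure Nd"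
  using real_distribution.finite_borel_measure_M[OF Nd_rd] .

lemma Phi_mono: "x \<le> y \<Longrightarrow> std_normal_cdf x \<le> std_normal_cdf y"
  unfolding Phi_cdf by (rule finite_borel_measure.cdf_nondecreasing[OF Nd_fbm])

lemma Phi_cont: "isCont std_normal_cdf x"
proof -
  have "emeasure Nd {x} = 0"
    by (subst emeasure_density) (auto simp: nn_integral_indicator_singleton)
  then have "measure Nd {x} = 0" by (simp add: measure_def)
  then show ?thesis unfolding Phi_cdf by (simp add: finite_borel_measure.isCont_cdf[OF Nd_fbm])
qed

lemma Phi_top: "(std_normal_cdf \<longlongrightarrow> 1) at_top"
  unfolding Phi_cdf using real_distribution.cdf_lim_at_top_prob[OF Nd_rd] .

lemma Phi_bot: "(std_normal_cdf \<longlongrightarrow> 0) at_bot"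
  unfolding Phi_cdf using finite_borel_measure.cdf_lim_at_bot real_distribution.finite_borel_measure_M[OF Nd_rd] by blast

lemma Nd_interval:
  assumes "a \<le> b"
  shows "measure Nd {a<..b} \<ge> (b - a) * std_normal_density (max \<bar>a\<bar> \<bar>b\<bar>)"
proof -
  let ?c = "std_normal_density (max \<bar>a\<bar> \<bar>b\<bar>)"
  have pt: "ennreal ?c * indicator {a<..b} x \<le> ennreal (std_normal_density x) * indicator {a<..b} x" for x
  proof (cases "x \<in> {a<..b}")
    case True
    then have "\<bar>x\<bar> \<le> max \<bar>a\<bar> \<bar>b\<bar>" by auto
    then have "\<bar>x\<bar>\<^sup>2 \<le> (max \<bar>a\<bar> \<bar>b\<bar>)\<^sup>2"
      by (intro power_mono) auto
    then have "x\<^sup>2 \<le> (max \<bar>a\<bar> \<bar>b\<bar>)\<^sup>2" by simp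
    then have "?c \<le> std_normal_density x"
      unfolding std_normal_density_def by (intro mult_left_mono) auto
    then show ?thesis using True by (simp add: ennreal_leI)
  qed simp
  have "ennreal ((b - a) * ?c) = (\<integral>\<^sup>+x. ennreal ?c * indicator {a<..b} x \<partial>lborel)"
    using assms by (subst nn_integral_cmult_indicator) (auto simp: ennreal_mult' mult.commute normal_density_nonneg)
  also have "\<dots> \<le> (\<integral>\<^sup>+x. ennreal (std_normal_density x) * indicator {a<..b} x \<partial>lborel)"
    by (intro nn_integral_mono pt)
  also have "\<dots> = emeasure Nd {a<..b}"
    by (subst emeasure_density) auto
  finally have "ennreal ((b - a) * ?c) \<le> emeasure Nd {a<..b}" .
  moreover have "emeasure Nd {a<..b} = ennreal (measure Nd {a<..b})"
    using finite_measure.emeasure_eq_measure[OF prob_space.finite_measure[OF Nd_prob]] by blast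
  ultimately show ?thesis
    using assms by (simp add: normal_density_nonneg ennreal_le_iff)
qed

lemma Phi_tail: "t \<ge> 0 \<Longrightarrow> 1 - std_normal_cdf t \<ge> std_normal_density (t + 1)"
proof -
  assume t: "t \<ge> 0"
  have "1 - std_normal_cdf t = measure Nd ({..t+1} - {..t}) + (1 - std_normal_cdf (t+1))"
    unfolding std_normal_cdf_def
    by (subst finite_measure.finite_measure_Diff[OF prob_space.finite_measure[OF Nd_prob]]) auto
  also have "{..t+1} - {..t} = {t<..t+1}" by auto
  finally have "1 - std_normal_cdf t \<ge> measure Nd {t<..t+1}"
    using real_distribution.cdf_bounded_prob[OF Nd_rd, of "t+1"] Phi_cdf by simp
  moreover have "measure Nd {t<..t+1} \<ge> std_normal_density (t+1)"
    using Nd_interval[of t "t+1"] t by simp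
  ultimately show ?thesis by linarith
qed

lemma Phi_pos: "std_normal_cdf x > 0"
proof -
  have "std_normal_cdf x \<ge> measure Nd {x-1<..x}"
    unfolding std_normal_cdf_def
    by (intro finite_measure.finite_measure_mono[OF prob_space.finite_measure[OF Nd_prob]]) auto
  moreover have "measure Nd {x-1<..x} \<ge> std_normal_density (max \<bar>x-1\<bar> \<bar>x\<bar>)"
    using Nd_interval[of "x-1" x] by simp
  moreover have "std_normal_density (max \<bar>x-1\<bar> \<bar>x\<bar>) > 0" by (simp add: std_normal_density_def)
  ultimately show ?thesis by linarith
qed

lemma Phi_lt1: "std_normal_cdf x < 1"
proof -
  have "1 - std_normal_cdf x \<ge> measure Nd {x<..x+1}"
  proof -
    have "1 - std_normal_cdf x = measure Nd ({..x+1} - {..x}) + (1 - std_normal_cdf (x+1))"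
      unfolding std_normal_cdf_def
      by (subst finite_measure.finite_measure_Diff[OF prob_space.finite_measure[OF Nd_prob]]) auto
    also have "{..x+1} - {..x} = {x<..x+1}" by auto
    finally show ?thesis
      using real_distribution.cdf_bounded_prob[OF Nd_rd, of "x+1"] Phi_cdf by simp
  qed
  moreover have "measure Nd {x<..x+1} \<ge> std_normal_density (max \<bar>x\<bar> \<bar>x+1\<bar>)"
    using Nd_interval[of x "x+1"] by simp
  moreover have "std_normal_density (max \<bar>x\<bar> \<bar>x+1\<bar>) > 0" by (simp add: std_normal_density_def)
  ultimately show ?thesis by linarith
qed



lemma galois_gen:
  fixes F :: "real \<Rightarrow> real"
  assumes cont: "continuous_on UNIV F" and mono: "mono F"
    and bot: "(F \<longlongrightarrow> 0) at_bot" and top: "(F \<longlongrightarrow> 1) at_top"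
    and u: "0 < u" "u < 1"
  shows "gen_inv F u \<le> y \<longleftrightarrow> u \<le> F y" and "F (gen_inv F u) = u"
proof -
  let ?S = "{y. u \<le> F y}"
  have "\<forall>\<^sub>F y in at_top. F y > u" using order_tendstoD(1)[OF top u(2)] .
  then obtain y1 where "F y1 > u" by (metis eventually_at_top_linorder order.refl)
  then have ne: "?S \<noteq> {}" using less_imp_le by blast
  have "\<forall>\<^sub>F y in at_bot. F y < u" using order_tendstoD(2)[OF bot u(1)] .
  then obtain y0 where y0: "\<And>y. y \<le> y0 \<Longrightarrow> F y < u" by (auto simp: eventually_at_bot_linorder)
  have bdd: "bdd_below ?S"
    by (rule bdd_belowI[of _ y0]) (metis y0 linorder_not_le mem_Collect_eq less_imp_le)
  have cl: "closed ?S"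
    using cont by (intro closed_Collect_le) (auto intro: continuous_on_const)
  have mem: "gen_inv F u \<in> ?S" unfolding gen_inv_def by (rule closed_contains_Inf[OF ne bdd cl])
  have low: "\<And>y. u \<le> F y \<Longrightarrow> gen_inv F u \<le> y" unfolding gen_inv_def
    using bdd by (intro cInf_lower) auto
  show "gen_inv F u \<le> y \<longleftrightarrow> u \<le> F y"
    using mem low mono by (auto dest: monoD intro: order.trans)
  show "F (gen_inv F u) = u"
  proof (rule ccontr)
    assume "F (gen_inv F u) \<noteq> u"
    with mem have gt: "F (gen_inv F u) > u" by auto
    have "(F \<longlongrightarrow> F (gen_inv F u)) (at_left (gen_inv F u))"
      using cont by (meson UNIV_I continuous_on_def filterlim_at_split tendsto_at_iff_sequentially
          continuous_on_interior interior_UNIV isCont_def tendsto_within_subset subset_UNIV open_UNIV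
          continuous_on_eq_continuous_at)
    from order_tendstoD(1)[OF this gt]
    have "\<forall>\<^sub>F y in at_left (gen_inv F u). u < F y" .
    moreover have "\<forall>\<^sub>F y in at_left (gen_inv F u). y < gen_inv F u"
      by (simp add: eventually_at_filter)
    ultimately have "\<forall>\<^sub>F y in at_left (gen_inv F u). u < F y \<and> y < gen_inv F u"
      by (rule eventually_conj)
    then obtain y where "y < gen_inv F u" "u < F y"
      using eventually_happens'[OF trivial_limit_at_left_real] by blast
    with low[of y] show False by auto
  qed
qed

lemma cdf_rv_props:
  assumes "prob_space M" "V \<in> borel_measurable M"
  shows "mono (cdf_rv M V)" "(cdf_rv M V \<longlongrightarrow> 0) at_bot" "(cdf_rv M V \<longlongrightarrow> 1) at_top"
proof -
  interpret prob_space M by fact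
  have rd: "real_distribution (distr M borel V)" using assms(2) by simp
  have eq: "cdf_rv M V = cdf (distr M borel V)"
    using assms(2) by (auto simp: cdf_rv_def cdf_def measure_distr vimage_def Int_def conj_commute intro!: arg_cong2[where f=measure])
  show "mono (cdf_rv M V)" unfolding eq
    using finite_borel_measure.cdf_nondecreasing[OF real_distribution.finite_borel_measure_M[OF rd]]
    by (auto simp: mono_def)
  show "(cdf_rv M V \<longlongrightarrow> 0) at_bot" unfolding eq
    using finite_borel_measure.cdf_lim_at_bot[OF real_distribution.finite_borel_measure_M[OF rd]] .
  show "(cdf_rv M V \<longlongrightarrow> 1) at_top" unfolding eq
    using real_distribution.cdf_lim_at_top_prob[OF rd] .
qed

lemma galois_cdf:
  assumes "prob_space M" "V \<in> borel_measurable M" "continuous_on UNIV (cdf_rv M V)" "0 < u" "u < 1"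
  shows "gen_inv (cdf_rv M V) u \<le> y \<longleftrightarrow> u \<le> cdf_rv M V y"
    and "cdf_rv M V (gen_inv (cdf_rv M V) u) = u"
  using galois_gen[OF assms(3) cdf_rv_props[OF assms(1,2)] assms(4,5)] by auto



lemma matrix_inv_props:
  fixes R :: "real^'n^'n"
  assumes "invertible R"
  shows "R ** matrix_inv R = mat 1" "matrix_inv R ** R = mat 1"
proof -
  from assms obtain A' :: "real^'n^'n" where "R ** A' = mat 1 \<and> A' ** R = mat 1"
    unfolding invertible_def by blast
  then have "R ** matrix_inv R = mat 1 \<and> matrix_inv R ** R = mat 1"
    unfolding matrix_inv_def by (rule someI)
  then show "R ** matrix_inv R = mat 1" "matrix_inv R ** R = mat 1" by auto
qed

lemma RP_vec:
  fixes R :: "real^'n^'n"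
  assumes "invertible R"
  shows "R *v (matrix_inv R *v x) = x"
  by (simp add: matrix_vector_mul_assoc matrix_inv_props[OF assms])

lemma sym_inner:
  fixes R :: "real^'n^'n"
  assumes "transpose R = R"
  shows "x \<bullet> (R *v y) = (R *v x) \<bullet> y"
proof -
  have "x \<bullet> (R *v y) = (x v* R) \<bullet> y" by (simp add: dot_lmul_matrix)
  also have "x v* R = transpose R *v x" by simp
  finally show ?thesis using assms by simp
qed

lemma quad_shift:
  fixes R :: "real^'n^'n"
  assumes sym: "transpose R = R" and inv: "invertible R"
  shows "(w + R *v l) \<bullet> (matrix_inv R *v (w + R *v l)) =
         w \<bullet> (matrix_inv R *v w) + 2 * (l \<bullet> w) + l \<bullet> (R *v l)"
proof -
  let ?P = "matrix_inv R"
  have "?P *v (R *v l) = l" by (simp add: matrix_vector_mul_assoc matrix_inv_props[OF inv])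
  then have "?P *v (w + R *v l) = ?P *v w + l" by (simp add: matrix_vector_right_distrib)
  then have "(w + R *v l) \<bullet> (?P *v (w + R *v l)) = w \<bullet> (?P *v w) + w \<bullet> l + (R *v l) \<bullet> (?P *v w) + (R *v l) \<bullet> l"
    by (simp add: inner_add_left inner_add_right)
  also have "(R *v l) \<bullet> (?P *v w) = l \<bullet> (R *v (?P *v w))" using sym_inner[OF sym] by simp
  also have "\<dots> = l \<bullet> w" using RP_vec[OF inv] by simp
  also have "(R *v l) \<bullet> l = l \<bullet> (R *v l)" by (simp add: inner_commute)
  finally show ?thesis by (simp add: inner_commute)
qed

lemma dens_shift:
  fixes R :: "real^'n^'n"
  assumes sym: "transpose R = R" and inv: "invertible R"
  shows "mvn_density R (w + R *v l) * exp (l \<bullet> (w + R *v l)) = mvn_density R w * exp (l \<bullet> (R *v l) / 2)"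
proof -
  have "mvn_density R (w + R *v l) * exp (l \<bullet> (w + R *v l)) =
     exp (- ((w + R *v l) \<bullet> (matrix_inv R *v (w + R *v l))) / 2 + l \<bullet> (w + R *v l)) / sqrt ((2 * pi) ^ CARD('n) * det R)"
    unfolding mvn_density_def exp_add by simp
  also have "- ((w + R *v l) \<bullet> (matrix_inv R *v (w + R *v l))) / 2 + l \<bullet> (w + R *v l)
     = - (w \<bullet> (matrix_inv R *v w)) / 2 + l \<bullet> (R *v l) / 2"
    by (simp add: quad_shift[OF sym inv] inner_add_right field_simps)
  finally show ?thesis unfolding mvn_density_def exp_add by simp
qed

lemma mgf_set:
  fixes R :: "real^'n^'n"
  assumes sym: "transpose R = R" and inv: "invertible R"
    and S: "S \<in> sets borel" and inv_S: "\<And>w. w + R *v l \<in> S \<longleftrightarrow> w \<in> S"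
  shows "(\<integral>\<^sup>+w. indicator S w * ennreal (mvn_density R w) * ennreal (exp (l \<bullet> w)) \<partial>lborel)
     = ennreal (exp (l \<bullet> (R *v l) / 2)) * emeasure (density lborel (mvn_density R)) S"
proof -
  let ?c = "R *v l"
  have mf: "(\<lambda>w. mvn_density R w) \<in> borel_measurable borel"
    unfolding mvn_density_def
    by (intro borel_measurable_divide borel_measurable_continuous_onI continuous_intros borel_measurable_const) auto
  have ml: "(\<lambda>w. exp (l \<bullet> w)) \<in> borel_measurable (borel :: (real^'n) measure)"
    by (intro borel_measurable_continuous_onI continuous_intros)
  have "(\<integral>\<^sup>+w. indicator S w * ennreal (mvn_density R w) * ennreal (exp (l \<bullet> w)) \<partial>lborel)
     = (\<integral>\<^sup>+w. indicator S w * ennreal (mvn_density R w) * ennreal (exp (l \<bullet> w)) \<partial>(distr lborel borel ((+) ?c)))"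
    by (simp add: lborel_distr_plus)
  also have "\<dots> = (\<integral>\<^sup>+w. indicator S (?c + w) * ennreal (mvn_density R (?c + w)) * ennreal (exp (l \<bullet> (?c + w))) \<partial>lborel)"
    using S mf ml by (subst nn_integral_distr) auto
  also have "\<dots> = (\<integral>\<^sup>+w. ennreal (exp (l \<bullet> (R *v l) / 2)) * (indicator S w * ennreal (mvn_density R w)) \<partial>lborel)"
  proof (intro nn_integral_cong)
    fix w :: "real^'n"
    have "indicator S (?c + w) = (indicator S w :: ennreal)"
      using inv_S[of w] by (simp add: indicator_def add.commute)
    moreover have "ennreal (mvn_density R (?c + w)) * ennreal (exp (l \<bullet> (?c + w)))
        = ennreal (exp (l \<bullet> (R *v l) / 2)) * ennreal (mvn_density R w)"
      using dens_shift[OF sym inv, of w l]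
      by (simp add: ennreal_mult''[symmetric] add.commute mult.commute)
    ultimately show "indicator S (?c + w) * ennreal (mvn_density R (?c + w)) * ennreal (exp (l \<bullet> (?c + w)))
       = ennreal (exp (l \<bullet> (R *v l) / 2)) * (indicator S w * ennreal (mvn_density R w))"
      by (simp add: mult.assoc mult.left_commute)
  qed
  also have "\<dots> = ennreal (exp (l \<bullet> (R *v l) / 2)) * (\<integral>\<^sup>+w. indicator S w * ennreal (mvn_density R w) \<partial>lborel)"
    using S mf by (subst nn_integral_cmult) auto
  also have "(\<integral>\<^sup>+w. indicator S w * ennreal (mvn_density R w) \<partial>lborel) = emeasure (density lborel (mvn_density R)) S"
    using S mf by (subst emeasure_density) (auto simp: mult.commute intro!: nn_integral_cong)
  finally show ?thesis .
qed

lemma mvn_meas: fixes R :: "real^'n^'n" shows "(\<lambda>w. mvn_density R w) \<in> borel_measurable borel"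
  unfolding mvn_density_def
  by (intro borel_measurable_divide borel_measurable_continuous_onI continuous_intros borel_measurable_const) auto

lemma mvn_meas_enn: fixes R :: "real^'n^'n" shows "(\<lambda>w. ennreal (mvn_density R w)) \<in> borel_measurable borel"
  using measurable_compose[OF mvn_meas[of R] measurable_ennreal] by (simp add: o_def)

lemma chernoff:
  fixes R :: "real^'n^'n"
  assumes sym: "transpose R = R" and inv: "invertible R"
    and S: "S \<in> sets borel" and inv_S: "\<And>w. w + R *v l \<in> S \<longleftrightarrow> w \<in> S"
  shows "emeasure (density lborel (mvn_density R)) (S \<inter> {w. l \<bullet> w > r})
     \<le> ennreal (exp (l \<bullet> (R *v l) / 2 - r)) * emeasure (density lborel (mvn_density R)) S"
proof -
  have mH: "{w::real^'n. l \<bullet> w > r} \<in> sets borel"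
    by (intro borel_open open_Collect_less continuous_intros)
  have ml: "(\<lambda>w. exp (l \<bullet> w)) \<in> borel_measurable (borel :: (real^'n) measure)"
    by (intro borel_measurable_continuous_onI continuous_intros)
  have "emeasure (density lborel (mvn_density R)) (S \<inter> {w. l \<bullet> w > r})
     = (\<integral>\<^sup>+w. ennreal (mvn_density R w) * indicator (S \<inter> {w. l \<bullet> w > r}) w \<partial>lborel)"
    using S mH mvn_meas_enn by (subst emeasure_density) auto
  also have "\<dots> \<le> (\<integral>\<^sup>+w. ennreal (exp (-r)) * (indicator S w * ennreal (mvn_density R w) * ennreal (exp (l \<bullet> w))) \<partial>lborel)"
  proof (intro nn_integral_mono)
    fix w :: "real^'n"
    show "ennreal (mvn_density R w) * indicator (S \<inter> {w. l \<bullet> w > r}) w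
       \<le> ennreal (exp (-r)) * (indicator S w * ennreal (mvn_density R w) * ennreal (exp (l \<bullet> w)))"
    proof (cases "w \<in> S \<inter> {w. l \<bullet> w > r}")
      case True
      then have "1 \<le> exp (l \<bullet> w - r)" by simp
      then have "ennreal 1 \<le> ennreal (exp (l \<bullet> w - r))" by (rule ennreal_leI)
      then have "ennreal (mvn_density R w) * 1 \<le> ennreal (mvn_density R w) * ennreal (exp (l \<bullet> w - r))"
        by (intro mult_left_mono) auto
      moreover have "ennreal (exp (l \<bullet> w - r)) = ennreal (exp (-r)) * ennreal (exp (l \<bullet> w))"
        by (simp add: ennreal_mult''[symmetric] exp_add[symmetric])
      ultimately show ?thesis using True by (simp add: mult_ac)
    qed simp
  qed
  also have "\<dots> = ennreal (exp (-r)) * (\<integral>\<^sup>+w. indicator S w * ennreal (mvn_density R w) * ennreal (exp (l \<bullet> w)) \<partial>lborel)"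
  proof -
    have mle: "(\<lambda>w. ennreal (exp (l \<bullet> w))) \<in> borel_measurable borel"
      using measurable_compose[OF ml measurable_ennreal] by (simp add: o_def)
    show ?thesis
      using S mvn_meas_enn[of R] mle
      by (intro nn_integral_cmult borel_measurable_times_ennreal borel_measurable_indicator) auto
  qed
  also have "\<dots> = ennreal (exp (-r)) * (ennreal (exp (l \<bullet> (R *v l) / 2)) * emeasure (density lborel (mvn_density R)) S)"
    by (simp add: mgf_set[OF sym inv S inv_S])
  also have "\<dots> = ennreal (exp (l \<bullet> (R *v l) / 2 - r)) * emeasure (density lborel (mvn_density R)) S"
    by (simp add: mult.assoc[symmetric] ennreal_mult''[symmetric] exp_add[symmetric])
  finally show ?thesis .
qed

lemma a_ge1:
  fixes R :: "real^'n^'n"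
  assumes sym: "transpose R = R" and inv: "invertible R"
    and psd: "\<And>v. 0 \<le> v \<bullet> (R *v v)" and diag: "R $ k $ k = 1"
  shows "matrix_inv R $ k $ k \<ge> 1"
proof -
  let ?e = "axis k (1::real) :: real^'n" and ?P = "matrix_inv R"
  let ?u = "?P *v ?e"
  have Ru: "R *v ?u = ?e" using RP_vec[OF inv] .
  have ue: "?u \<bullet> ?e = ?P $ k $ k" by (simp add: inner_axis matrix_vector_mult_basis column_def)
  have eRe: "?e \<bullet> (R *v ?e) = 1" using diag by (simp add: inner_axis' matrix_vector_mult_basis column_def)
  have uRe: "?u \<bullet> (R *v ?e) = 1" using sym_inner[OF sym, of ?u ?e] Ru by (simp add: inner_axis)
  have "0 \<le> (?u - ?e) \<bullet> (R *v (?u - ?e))" by (rule psd)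
  also have "\<dots> = ?u \<bullet> ?e - ?u \<bullet> (R *v ?e) - ?e \<bullet> ?e + ?e \<bullet> (R *v ?e)"
    using Ru by (simp add: matrix_vector_mult_diff_distrib inner_diff_left inner_diff_right inner_commute)
  finally show ?thesis using ue eRe uRe by (simp add: inner_axis)
qed

lemma core:
  fixes R :: "real^'n^'n" and k :: 'n
  assumes sym: "transpose R = R" and inv: "invertible R"
    and psd: "\<And>v. 0 \<le> v \<bullet> (R *v v)" and diag: "R $ k $ k = 1"
    and prob: "prob_space (density lborel (mvn_density R))"
    and S: "S \<in> sets borel" and invS: "\<And>w s. w + s *\<^sub>R axis k 1 \<in> S \<longleftrightarrow> w \<in> S"
    and t: "t > 0"
  shows "measure (density lborel (mvn_density R)) ({w. w $ k > t} \<inter> S)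
     \<le> exp (- (1 / matrix_inv R $ k $ k) * t\<^sup>2 / 32) * measure (density lborel (mvn_density R)) S
        + exp (- t\<^sup>2 / 2 - (1 / matrix_inv R $ k $ k) * t\<^sup>2 / 4)"
proof -
  let ?N = "density lborel (mvn_density R)"
  interpret N: prob_space ?N by (rule prob)
  let ?e = "axis k (1::real) :: real^'n" and ?P = "matrix_inv R"
  let ?u = "?P *v ?e"
  define a where "a = ?P $ k $ k"
  define b where "b = 1 / a"
  have a1: "a \<ge> 1" unfolding a_def by (rule a_ge1[OF sym inv psd diag])
  have b0: "b > 0" "b \<le> 1" "a * b = 1" using a1 by (auto simp: b_def)
  have Ru: "R *v ?u = ?e" using RP_vec[OF inv] .
  have ue: "?u \<bullet> ?e = a" unfolding a_def by (simp add: inner_axis matrix_vector_mult_basis column_def)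
  have eRe: "?e \<bullet> (R *v ?e) = 1" using diag by (simp add: inner_axis' matrix_vector_mult_basis column_def)
  have uRe: "?u \<bullet> (R *v ?e) = 1" using sym_inner[OF sym, of ?u ?e] Ru by (simp add: inner_axis)
  have ee: "?e \<bullet> ?e = 1" by (simp add: inner_axis)
  have ew: "?e \<bullet> w = w $ k" for w :: "real^'n" by (simp add: inner_axis')
  have sets: "{w::real^'n. r < l \<bullet> w} \<in> sets borel" for l r
    by (intro borel_open open_Collect_less continuous_intros)
  define l1 where "l1 = (b * t / 4) *\<^sub>R ?u"
  have Rl1: "R *v l1 = (b * t / 4) *\<^sub>R ?e" unfolding l1_def by (simp add: matrix_vector_mult_scaleR Ru)
  have q1: "l1 \<bullet> (R *v l1) = (b * t / 4)\<^sup>2 * a"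
    unfolding Rl1 by (simp add: l1_def ue power2_eq_square)
  have "emeasure ?N (S \<inter> {w. b * t\<^sup>2 / 16 < l1 \<bullet> w}) \<le> ennreal (exp (l1 \<bullet> (R *v l1) / 2 - b * t\<^sup>2 / 16)) * emeasure ?N S"
    by (rule chernoff[OF sym inv S]) (simp add: Rl1 invS)
  also have "l1 \<bullet> (R *v l1) / 2 - b * t\<^sup>2 / 16 = - b * t\<^sup>2 / 32"
  proof -
    have "(b * t / 4)\<^sup>2 * a = b * t\<^sup>2 / 16 * (a * b)" by (simp add: power2_eq_square field_simps)
    then show ?thesis unfolding q1 using b0 by simp
  qed
  finally have c1: "measure ?N (S \<inter> {w. b * t\<^sup>2 / 16 < l1 \<bullet> w}) \<le> exp (- b * t\<^sup>2 / 32) * measure ?N S"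
    by (simp add: N.emeasure_eq_measure ennreal_mult''[symmetric] ennreal_le_iff)
  define l2 where "l2 = t *\<^sub>R (?e - b *\<^sub>R ?u)"
  have Rl2: "R *v l2 = t *\<^sub>R (R *v ?e - b *\<^sub>R ?e)"
    unfolding l2_def by (simp add: matrix_vector_mult_scaleR matrix_vector_mult_diff_distrib Ru)
  have "(?e - b *\<^sub>R ?u) \<bullet> (R *v ?e - b *\<^sub>R ?e) = ?e \<bullet> (R *v ?e) - b * (?e \<bullet> ?e) - b * (?u \<bullet> (R *v ?e)) + b * b * (?u \<bullet> ?e)"
    by (simp add: inner_diff_left inner_diff_right algebra_simps)
  also have "\<dots> = 1 - b" using eRe ee uRe ue b0 by (simp add: algebra_simps)
  finally have q2': "(?e - b *\<^sub>R ?u) \<bullet> (R *v ?e - b *\<^sub>R ?e) = 1 - b" .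
  have q2: "l2 \<bullet> (R *v l2) = t\<^sup>2 * (1 - b)"
    unfolding Rl2 by (simp add: l2_def q2' power2_eq_square)
  have "emeasure ?N (UNIV \<inter> {w. (1 - b / 4) * t\<^sup>2 < l2 \<bullet> w}) \<le> ennreal (exp (l2 \<bullet> (R *v l2) / 2 - (1 - b / 4) * t\<^sup>2)) * emeasure ?N UNIV"
    by (rule chernoff[OF sym inv]) auto
  also have "l2 \<bullet> (R *v l2) / 2 - (1 - b / 4) * t\<^sup>2 = - t\<^sup>2 / 2 - b * t\<^sup>2 / 4"
    unfolding q2 by (simp add: field_simps)
  finally have c2: "measure ?N {w. (1 - b / 4) * t\<^sup>2 < l2 \<bullet> w} \<le> exp (- t\<^sup>2 / 2 - b * t\<^sup>2 / 4)"
    using N.emeasure_space_1 by (simp add: N.emeasure_eq_measure ennreal_le_iff)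
  have incl: "{w. w $ k > t} \<inter> S \<subseteq> (S \<inter> {w. b * t\<^sup>2 / 16 < l1 \<bullet> w}) \<union> {w. (1 - b / 4) * t\<^sup>2 < l2 \<bullet> w}"
  proof
    fix w assume w: "w \<in> {w. w $ k > t} \<inter> S"
    show "w \<in> (S \<inter> {w. b * t\<^sup>2 / 16 < l1 \<bullet> w}) \<union> {w. (1 - b / 4) * t\<^sup>2 < l2 \<bullet> w}"
    proof (cases "b * t\<^sup>2 / 16 < l1 \<bullet> w")
      case True then show ?thesis using w by auto
    next
      case False
      then have "(b * t / 4) * (?u \<bullet> w) \<le> (b * t / 4) * (t / 4)"
        by (simp add: l1_def power2_eq_square)
      then have uw: "?u \<bullet> w \<le> t / 4" using b0 t by (simp add: mult_le_cancel_left_pos)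
      have "l2 \<bullet> w = t * (w $ k - b * (?u \<bullet> w))" by (simp add: l2_def inner_diff_left ew)
      moreover have "w $ k - b * (?u \<bullet> w) > t - b * (t / 4)"
      proof -
        have "b * (?u \<bullet> w) \<le> b * (t / 4)" using mult_left_mono[OF uw, of b] b0 by simp
        moreover have "w $ k > t" using w by simp
        ultimately show ?thesis by linarith
      qed
      ultimately have "l2 \<bullet> w > t * (t - b * (t / 4))" using t by (simp add: mult_strict_left_mono)
      then show ?thesis by (simp add: power2_eq_square algebra_simps)
    qed
  qed
  have "measure ?N ({w. w $ k > t} \<inter> S) \<le> measure ?N ((S \<inter> {w. b * t\<^sup>2 / 16 < l1 \<bullet> w}) \<union> {w. (1 - b / 4) * t\<^sup>2 < l2 \<bullet> w})"
    using incl S sets by (intro N.finite_measure_mono) auto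
  also have "\<dots> \<le> measure ?N (S \<inter> {w. b * t\<^sup>2 / 16 < l1 \<bullet> w}) + measure ?N {w. (1 - b / 4) * t\<^sup>2 < l2 \<bullet> w}"
    using S sets by (intro measure_Un_le) auto
  finally show ?thesis using c1 c2 unfolding b_def a_def by simp
qed



lemma meas_nth: "(\<lambda>w::real^'n. w $ j) \<in> borel_measurable borel"
  by (simp add: borel_measurable_continuous_onI continuous_on_component)

lemma meas_vec: fixes f :: "'a \<Rightarrow> 'n::finite \<Rightarrow> real"
  assumes "\<And>j. (\<lambda>\<omega>. f \<omega> j) \<in> borel_measurable M"
  shows "(\<lambda>\<omega>. \<chi> j. f \<omega> j) \<in> borel_measurable M"
  apply (subst borel_measurable_euclidean_space)
  using assms by (auto simp: Basis_vec_def inner_axis)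

definition Fj :: "'a measure \<Rightarrow> ('a \<Rightarrow> real) \<Rightarrow> ('a \<Rightarrow> real^'d) \<Rightarrow> 'd option \<Rightarrow> real \<Rightarrow> real" where
  "Fj M Y X j = (case j of None \<Rightarrow> cdf_rv M Y | Some i \<Rightarrow> cdf_rv M (\<lambda>\<omega>. X \<omega> $ i))"

definition Zv :: "('a \<Rightarrow> real) \<Rightarrow> ('a \<Rightarrow> real^'d) \<Rightarrow> 'a \<Rightarrow> real^('d option)" where
  "Zv Y X \<omega> = (\<chi> j. case j of None \<Rightarrow> Y \<omega> | Some i \<Rightarrow> X \<omega> $ i)"

definition Tm :: "'a measure \<Rightarrow> ('a \<Rightarrow> real) \<Rightarrow> ('a \<Rightarrow> real^'d) \<Rightarrow> real^('d option) \<Rightarrow> real^('d option)" where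
  "Tm M Y X w = (\<chi> j. gen_inv (Fj M Y X j) (std_normal_cdf (w $ j)))"

context
  fixes M :: "'a measure" and Y :: "'a \<Rightarrow> real" and X :: "'a \<Rightarrow> real^'d"
    and R :: "real^('d option)^('d option)"
  assumes PS: "prob_space M" and mY: "Y \<in> borel_measurable M" and mX: "X \<in> borel_measurable M"
    and cY: "continuous_on UNIV (cdf_rv M Y)" and cX: "\<And>i. continuous_on UNIV (cdf_rv M (\<lambda>\<omega>. X \<omega> $ i))"
    and GC: "has_gaussian_copula M Y X R"
begin

lemma Zv_comp_meas: "(\<lambda>\<omega>. Zv Y X \<omega> $ j) \<in> borel_measurable M"
proof (cases j)
  case None then show ?thesis using mY by (simp add: Zv_def)
next
  case (Some i)
  have "(\<lambda>\<omega>. X \<omega> $ i) \<in> borel_measurable M"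
    using measurable_compose[OF mX meas_nth[of i]] by (simp add: o_def)
  then show ?thesis using Some by (simp add: Zv_def)
qed

lemma Zv_meas: "Zv Y X \<in> borel_measurable M"
proof -
  have "Zv Y X = (\<lambda>\<omega>. \<chi> j. Zv Y X \<omega> $ j)" by simp
  also have "\<dots> \<in> borel_measurable M" by (rule meas_vec) (rule Zv_comp_meas)
  finally show ?thesis .
qed

lemma Fj_eq: "Fj M Y X j = cdf_rv M (\<lambda>\<omega>. Zv Y X \<omega> $ j)"
  by (cases j) (auto simp: Fj_def Zv_def)

lemma Fj_cont: "continuous_on UNIV (Fj M Y X j)"
  using cY cX by (cases j) (auto simp: Fj_def)

lemma galois_j:
  assumes "0 < u" "u < 1"
  shows "gen_inv (Fj M Y X j) u \<le> y \<longleftrightarrow> u \<le> Fj M Y X j y"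
    and "Fj M Y X j (gen_inv (Fj M Y X j) u) = u"
  using galois_cdf[OF PS Zv_comp_meas[of j] _ assms] Fj_cont[of j] unfolding Fj_eq by auto

lemma Fj_mono: "mono (Fj M Y X j)"
  unfolding Fj_eq by (rule cdf_rv_props(1)[OF PS Zv_comp_meas])

lemma Fj_top: "(Fj M Y X j \<longlongrightarrow> 1) at_top"
  unfolding Fj_eq by (rule cdf_rv_props(3)[OF PS Zv_comp_meas])

lemma Tm_le: "Tm M Y X w \<le> a \<longleftrightarrow> (\<forall>j. std_normal_cdf (w $ j) \<le> Fj M Y X j (a $ j))"
  using galois_j(1)[OF Phi_pos Phi_lt1] by (simp add: less_eq_vec_def Tm_def)

lemma Tm_comp_mono: "mono (\<lambda>x. gen_inv (Fj M Y X j) (std_normal_cdf x))"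
proof (rule monoI)
  fix x y :: real assume "x \<le> y"
  then have "std_normal_cdf x \<le> Fj M Y X j (gen_inv (Fj M Y X j) (std_normal_cdf y))"
    using galois_j(2)[OF Phi_pos Phi_lt1] Phi_mono by simp
  then show "gen_inv (Fj M Y X j) (std_normal_cdf x) \<le> gen_inv (Fj M Y X j) (std_normal_cdf y)"
    using galois_j(1)[OF Phi_pos Phi_lt1] by simp
qed

lemma Tm_meas: "Tm M Y X \<in> borel_measurable borel"
  unfolding Tm_def
proof (rule meas_vec)
  fix j
  show "(\<lambda>w::real^('d option). gen_inv (Fj M Y X j) (std_normal_cdf (w $ j))) \<in> borel_measurable borel"
    using measurable_compose[OF meas_nth[of j] borel_measurable_mono[OF Tm_comp_mono[of j]]] by (simp add: o_def)
qed

lemma orth: "measure M {\<omega> \<in> space M. Zv Y X \<omega> \<le> a}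
   = measure (density lborel (mvn_density R)) {w. \<forall>j. std_normal_cdf (w $ j) \<le> Fj M Y X j (a $ j)}"
proof -
  have "{\<omega> \<in> space M. Zv Y X \<omega> \<le> a} =
     {\<omega> \<in> space M. Y \<omega> \<le> a $ None \<and> (\<forall>i. X \<omega> $ i \<le> (\<chi> i. a $ Some i) $ i)}"
    by (auto simp: less_eq_vec_def Zv_def split: option.splits)
  also have "measure M \<dots> = gaussian_copula R (\<chi> j. case j of None \<Rightarrow> cdf_rv M Y (a $ None)
                      | Some i \<Rightarrow> cdf_rv M (\<lambda>\<omega>. X \<omega> $ i) ((\<chi> i. a $ Some i) $ i))"
    using GC unfolding has_gaussian_copula_def by blast
  also have "(\<chi> j. case j of None \<Rightarrow> cdf_rv M Y (a $ None)
                      | Some i \<Rightarrow> cdf_rv M (\<lambda>\<omega>. X \<omega> $ i) ((\<chi> i. a $ Some i) $ i)) = (\<chi> j. Fj M Y X j (a $ j))"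
    by (auto simp: vec_eq_iff Fj_def split: option.splits)
  finally show ?thesis by (simp add: gaussian_copula_def)
qed

lemma Zv_set: "D \<in> sets borel \<Longrightarrow> {\<omega> \<in> space M. Zv Y X \<omega> \<in> D} \<in> sets M"
  using measurable_sets[OF Zv_meas, of D] by (simp add: vimage_def Int_def conj_commute)

lemma Tm_set: "D \<in> sets borel \<Longrightarrow> {w. Tm M Y X w \<in> D} \<in> sets borel"
  using measurable_sets[OF Tm_meas, of D] by (simp add: vimage_def)

lemma ev_le: "\<forall>\<^sub>F k in sequentially. \<forall>j. (z :: real^'n) $ j \<le> real k"
proof (intro eventually_all_finite allI)
  fix j
  obtain n :: nat where "z $ j \<le> real n" using real_arch_simple by blast
  then show "\<forall>\<^sub>F k in sequentially. z $ j \<le> real k"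
    unfolding eventually_sequentially by (metis dual_order.trans of_nat_le_iff)
qed

lemma N_prob: "prob_space (density lborel (mvn_density R))"
proof -
  let ?N = "density lborel (mvn_density R)"
  interpret M: prob_space M by (rule PS)
  define a :: "nat \<Rightarrow> real^('d option)" where "a k = (\<chi> j. real k)" for k
  define A where "A k = {\<omega> \<in> space M. Zv Y X \<omega> \<in> {..a k}}" for k
  define C where "C k = {w. \<forall>j. std_normal_cdf (w $ j) \<le> Fj M Y X j (real k)}" for k
  have Aeq: "measure M (A k) = measure ?N (C k)" for k
    using orth[of "a k"] by (simp add: A_def C_def a_def)
  have Cset: "C k \<in> sets borel" for k
  proof -
    have "C k = {w. Tm M Y X w \<in> {..a k}}" by (simp add: C_def Tm_le a_def)
    then show ?thesis using Tm_set[of "{..a k}"] by simp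
  qed
  have lim1: "(\<lambda>k. measure M (A k)) \<longlonglongrightarrow> 1"
  proof -
    have "(\<lambda>k. measure M (A k)) \<longlonglongrightarrow> measure M (\<Union>k. A k)"
    proof (rule M.finite_Lim_measure_incseq)
      have "A k \<in> sets M" for k unfolding A_def by (rule Zv_set) simp
      then show "range A \<subseteq> sets M" by auto
      show "incseq A" unfolding A_def a_def
        by (intro monoI) (auto simp: less_eq_vec_def intro: order.trans)
    qed
    moreover have "(\<Union>k. A k) = space M"
    proof safe
      fix \<omega> assume "\<omega> \<in> space M"
      obtain k where "\<forall>j. Zv Y X \<omega> $ j \<le> real k" using eventually_happens'[OF _ ev_le] by auto
      then show "\<omega> \<in> (\<Union>k. A k)" using \<open>\<omega> \<in> space M\<close> by (auto simp: A_def a_def less_eq_vec_def)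
    qed (auto simp: A_def)
    ultimately show ?thesis using M.prob_space by simp
  qed
  have lim2: "(\<lambda>k. emeasure ?N (C k)) \<longlonglongrightarrow> emeasure ?N (\<Union>k. C k)"
  proof (rule Lim_emeasure_incseq)
    show "range C \<subseteq> sets ?N" using Cset by auto
    show "incseq C" unfolding C_def
    proof (intro monoI subsetI)
      fix x y :: nat and w assume xy: "x \<le> y" and w: "w \<in> {w. \<forall>j. std_normal_cdf (w $ j) \<le> Fj M Y X j (real x)}"
      have "Fj M Y X j (real x) \<le> Fj M Y X j (real y)" for j
        using monoD[OF Fj_mono[of j], of "real x" "real y"] xy by simp
      then show "w \<in> {w. \<forall>j. std_normal_cdf (w $ j) \<le> Fj M Y X j (real y)}"
        using w by (auto intro: order.trans)
    qed
  qed
  have "(\<Union>k. C k) = UNIV"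
  proof safe
    fix w :: "real^('d option)"
    have "\<forall>\<^sub>F k in sequentially. \<forall>j. std_normal_cdf (w $ j) \<le> Fj M Y X j (real k)"
    proof (intro eventually_all_finite allI)
      fix j
      have "((\<lambda>k. Fj M Y X j (real k)) \<longlongrightarrow> 1) sequentially"
        using filterlim_compose[OF Fj_top filterlim_real_sequentially] by (simp add: o_def)
      from order_tendstoD(1)[OF this Phi_lt1[of "w $ j"]]
      show "\<forall>\<^sub>F k in sequentially. std_normal_cdf (w $ j) \<le> Fj M Y X j (real k)"
        by (auto elim: eventually_mono)
    qed
    then have "\<exists>k. \<forall>j. std_normal_cdf (w $ j) \<le> Fj M Y X j (real k)"
      by (rule eventually_happens'[OF sequentially_bot])
    then obtain k where "\<forall>j. std_normal_cdf (w $ j) \<le> Fj M Y X j (real k)" by blast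
    then show "w \<in> (\<Union>k. C k)" by (auto simp: C_def)
  qed auto
  with lim2 have lim2': "(\<lambda>k. emeasure ?N (C k)) \<longlonglongrightarrow> emeasure ?N UNIV" by simp
  have "\<forall>\<^sub>F k in sequentially. measure M (A k) > 1/2"
    using order_tendstoD(1)[OF lim1, of "1/2"] by simp
  then have ev: "\<forall>\<^sub>F k in sequentially. emeasure ?N (C k) = ennreal (measure M (A k))"
  proof (rule eventually_mono)
    fix k assume "measure M (A k) > 1/2"
    then have "measure ?N (C k) > 0" using Aeq by simp
    then have "emeasure ?N (C k) \<noteq> top" using measure_zero_top by force
    then show "emeasure ?N (C k) = ennreal (measure M (A k))"
      using Aeq by (simp add: emeasure_eq_ennreal_measure)
  qed
  have "(\<lambda>k. ennreal (measure M (A k))) \<longlonglongrightarrow> ennreal 1"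
    using lim1 by (rule tendsto_ennrealI)
  then have "(\<lambda>k. emeasure ?N (C k)) \<longlonglongrightarrow> 1"
    using tendsto_cong[OF ev] by simp
  then have "emeasure ?N UNIV = 1" using lim2' LIMSEQ_unique by blast
  then show ?thesis by (intro prob_spaceI) simp
qed

lemma distr_eq: "distr M borel (Zv Y X) = distr (density lborel (mvn_density R)) borel (Tm M Y X)"
proof -
  let ?N = "density lborel (mvn_density R)"
  interpret M: prob_space M by (rule PS)
  interpret N: prob_space ?N by (rule N_prob)
  define A :: "nat \<Rightarrow> (real^('d option)) set" where "A i = {..(\<chi> j. real i)}" for i
  have sb: "sets (borel :: (real^('d option)) measure) = sigma_sets UNIV (range atMost)"
    by (subst borel_eq_atMost) (simp add: sets_measure_of)
  have pd: "prob_space (distr M borel (Zv Y X))" using M.prob_space_distr[OF Zv_meas] .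
  show ?thesis
  proof (rule measure_eqI_generator_eq[where E = "range atMost" and \<Omega> = UNIV and A = A])
    show "Int_stable (range atMost :: (real^('d option)) set set)"
    proof (rule Int_stableI)
      fix a b :: "(real^('d option)) set" assume "a \<in> range atMost" "b \<in> range atMost"
      then obtain x y :: "real^('d option)" where "a = {..x}" "b = {..y}" by auto
      then have "a \<inter> b = {..inf x y}" by auto
      then show "a \<inter> b \<in> range atMost" by auto
    qed
    show "range atMost \<subseteq> Pow UNIV" by auto
    fix D assume "D \<in> range (atMost :: real^('d option) \<Rightarrow> _)"
    then obtain x where D: "D = {..x}" by auto
    have "emeasure (distr M borel (Zv Y X)) D = emeasure M {\<omega> \<in> space M. Zv Y X \<omega> \<le> x}"
      using Zv_meas D by (subst emeasure_distr) (auto intro!: arg_cong2[where f=emeasure])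
    also have "\<dots> = ennreal (measure ?N {w. \<forall>j. std_normal_cdf (w $ j) \<le> Fj M Y X j (x $ j)})"
      using orth[of x] by (simp add: M.emeasure_eq_measure)
    also have "{w. \<forall>j. std_normal_cdf (w $ j) \<le> Fj M Y X j (x $ j)} = Tm M Y X -` D \<inter> space ?N"
      using D by (auto simp: Tm_le)
    also have "ennreal (measure ?N \<dots>) = emeasure (distr ?N borel (Tm M Y X)) D"
      using Tm_meas D by (subst emeasure_distr) (auto simp: N.emeasure_eq_measure)
    finally show "emeasure (distr M borel (Zv Y X)) D = emeasure (distr ?N borel (Tm M Y X)) D" .
  next
    show "sets (distr M borel (Zv Y X)) = sigma_sets UNIV (range atMost)" using sb by simp
    show "sets (distr ?N borel (Tm M Y X)) = sigma_sets UNIV (range atMost)" using sb by simp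
    show "range A \<subseteq> range atMost" by (auto simp: A_def)
    show "(\<Union>i. A i) = UNIV"
    proof safe
      fix z :: "real^('d option)"
      obtain k where "\<forall>j. z $ j \<le> real k" using eventually_happens'[OF _ ev_le] by auto
      then show "z \<in> (\<Union>i. A i)" by (auto simp: A_def less_eq_vec_def)
    qed auto
    fix i show "emeasure (distr M borel (Zv Y X)) (A i) \<noteq> \<infinity>"
      using prob_space.finite_measure[OF pd] finite_measure.emeasure_finite by auto
  qed
qed


lemma Phi_surj: "0 < p \<Longrightarrow> p < 1 \<Longrightarrow> \<exists>t. std_normal_cdf t = p"
proof -
  assume p: "0 < p" "p < 1"
  from order_tendstoD(2)[OF Phi_bot p(1)] obtain a where a: "std_normal_cdf a < p"
    by (metis eventually_at_bot_linorder order.refl)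
  from order_tendstoD(1)[OF Phi_top p(2)] obtain b where b: "std_normal_cdf b > p"
    by (metis eventually_at_top_linorder order.refl)
  have ab: "a \<le> b" using a b Phi_mono[of b a] by (metis less_le_not_le linorder_le_cases order.strict_trans)
  have "continuous_on {a..b} std_normal_cdf"
    using Phi_cont by (simp add: continuous_at_imp_continuous_on)
  then show ?thesis using IVT'[of std_normal_cdf a p b] a b ab by auto
qed

lemma class_C_nonempty:
  assumes p: "0 < p" "p < 1"
  shows "(\<lambda>x. x $ i) \<in> class_C M X p"
proof -
  interpret M: prob_space M by (rule PS)
  let ?V = "\<lambda>\<omega>. X \<omega> $ i"
  have mV: "?V \<in> borel_measurable M" using measurable_compose[OF mX meas_nth[of i]] by (simp add: o_def)
  have F: "Fj M Y X (Some i) = cdf_rv M ?V" by (simp add: Fj_def)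
  let ?c = "gen_inv (cdf_rv M ?V) p"
  have "cdf_rv M ?V ?c = p" using galois_j(2)[OF p, of "Some i"] unfolding F .
  moreover have "{\<omega> \<in> space M. ?V \<omega> > ?c} = space M - {\<omega> \<in> space M. ?V \<omega> \<le> ?c}" by auto
  moreover have "{\<omega> \<in> space M. ?V \<omega> \<le> ?c} \<in> sets M" using mV by measurable
  ultimately have "measure M {\<omega> \<in> space M. ?V \<omega> > ?c} = 1 - p"
    using M.prob_compl by (simp add: cdf_rv_def)
  moreover have "(\<lambda>x::real^'d. x $ i) \<in> borel_measurable borel" by (rule meas_nth)
  ultimately show ?thesis by (simp add: class_C_def)
qed

lemma key:
  assumes corr: "correlation_matrix R" and inv: "invertible R"
    and p: "0 < p" "p < 1" and tp: "std_normal_cdf t = p" and t: "t > 0"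
    and g: "g \<in> class_C M X p"
  shows "cond_prob M {\<omega> \<in> space M. Y \<omega> > gen_inv (cdf_rv M Y) p}
            {\<omega> \<in> space M. g (X \<omega>) > gen_inv (cdf_rv M (\<lambda>\<omega>. g (X \<omega>))) p}
     \<le> exp (- (1 / matrix_inv R $ None $ None) * t\<^sup>2 / 32)
        + exp (- t\<^sup>2 / 2 - (1 / matrix_inv R $ None $ None) * t\<^sup>2 / 4) / (1 - p)"
proof -
  let ?N = "density lborel (mvn_density R)"
  interpret M: prob_space M by (rule PS)
  interpret N: prob_space ?N by (rule N_prob)
  define yp where "yp = gen_inv (cdf_rv M Y) p"
  define c where "c = gen_inv (cdf_rv M (\<lambda>\<omega>. g (X \<omega>))) p"
  define A where "A = {\<omega> \<in> space M. Y \<omega> > yp}"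
  define B where "B = {\<omega> \<in> space M. g (X \<omega>) > c}"
  have mg: "g \<in> borel_measurable borel" and PB: "measure M B = 1 - p"
    using g by (auto simp: class_C_def B_def c_def)
  define projX :: "real^('d option) \<Rightarrow> real^'d" where "projX z = (\<chi> i. z $ Some i)" for z
  have mproj: "projX \<in> borel_measurable borel" unfolding projX_def by (intro meas_vec meas_nth)
  have projZ: "projX (Zv Y X \<omega>) = X \<omega>" for \<omega> by (simp add: projX_def Zv_def vec_eq_iff)
  define DA where "DA = {z :: real^('d option). z $ None > yp}"
  define DB where "DB = {z. g (projX z) > c}"
  have mgp: "(\<lambda>z. g (projX z)) \<in> borel_measurable borel"
    using measurable_compose[OF mproj mg] by (simp add: o_def)
  have DBs: "DB \<in> sets borel"
    using measurable_sets[OF mgp, of "{c<..}"] by (simp add: DB_def vimage_def)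
  have DAs: "DA \<in> sets borel"
    using measurable_sets[OF meas_nth[of None], of "{yp<..}"] by (simp add: DA_def vimage_def)
  have transfer: "measure M {\<omega> \<in> space M. Zv Y X \<omega> \<in> D} = measure ?N {w. Tm M Y X w \<in> D}"
    if "D \<in> sets borel" for D
  proof -
    have "measure M {\<omega> \<in> space M. Zv Y X \<omega> \<in> D} = measure (distr M borel (Zv Y X)) D"
      using that Zv_meas by (subst measure_distr) (auto intro!: arg_cong2[where f=measure])
    also have "\<dots> = measure (distr ?N borel (Tm M Y X)) D" by (simp add: distr_eq)
    also have "\<dots> = measure ?N {w. Tm M Y X w \<in> D}"
      using that Tm_meas by (subst measure_distr) (auto intro!: arg_cong2[where f=measure])
    finally show ?thesis .
  qed
  define S where "S = {w. Tm M Y X w \<in> DB}"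
  have Ss: "S \<in> sets borel" unfolding S_def by (rule Tm_set[OF DBs])
  have B_eq: "B = {\<omega> \<in> space M. Zv Y X \<omega> \<in> DB}" by (simp add: B_def DB_def projZ)
  have AB_eq: "A \<inter> B = {\<omega> \<in> space M. Zv Y X \<omega> \<in> DA \<inter> DB}"
  proof -
    have zn: "Zv Y X \<omega> $ None = Y \<omega>" for \<omega> by (simp add: Zv_def)
    show ?thesis by (auto simp: A_def B_def DA_def DB_def projZ zn)
  qed
  have NS: "measure ?N S = 1 - p" using transfer[OF DBs] PB B_eq S_def by simp
  have Fnone: "Fj M Y X None = cdf_rv M Y" by (simp add: Fj_def)
  have Fyp: "cdf_rv M Y yp = p" using galois_j(2)[OF p, of None] unfolding Fnone yp_def .
  have sub: "{w. Tm M Y X w \<in> DA \<inter> DB} \<subseteq> {w. w $ None > t} \<inter> S"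
  proof
    fix w assume w: "w \<in> {w. Tm M Y X w \<in> DA \<inter> DB}"
    then have "\<not> gen_inv (cdf_rv M Y) (std_normal_cdf (w $ None)) \<le> yp"
      by (simp add: DA_def Tm_def Fnone)
    then have "\<not> std_normal_cdf (w $ None) \<le> p"
      using galois_j(1)[OF Phi_pos Phi_lt1, of None] Fyp unfolding Fnone by simp
    then have "w $ None > t" using Phi_mono[of "w $ None" t] tp by force
    then show "w \<in> {w. w $ None > t} \<inter> S" using w by (simp add: S_def)
  qed
  have invS: "w + s *\<^sub>R axis None 1 \<in> S \<longleftrightarrow> w \<in> S" for w s
  proof -
    have "projX (Tm M Y X (w + s *\<^sub>R axis None 1)) = projX (Tm M Y X w)"
      by (simp add: projX_def Tm_def vec_eq_iff axis_def)
    then show ?thesis by (simp add: S_def DB_def)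
  qed
  have sym: "transpose R = R" and psd: "\<And>v. 0 \<le> v \<bullet> (R *v v)" and diag: "R $ None $ None = 1"
    using corr by (auto simp: correlation_matrix_def)
  have "measure M (A \<inter> B) = measure ?N {w. Tm M Y X w \<in> DA \<inter> DB}"
    using transfer[of "DA \<inter> DB"] DAs DBs AB_eq by simp
  also have "\<dots> \<le> measure ?N ({w. w $ None > t} \<inter> S)"
    using sub Ss by (intro N.finite_measure_mono) (auto intro!: borel_open open_Collect_less continuous_intros)
  also have "\<dots> \<le> exp (- (1 / matrix_inv R $ None $ None) * t\<^sup>2 / 32) * measure ?N S
        + exp (- t\<^sup>2 / 2 - (1 / matrix_inv R $ None $ None) * t\<^sup>2 / 4)"
    by (rule core[OF sym inv psd diag N_prob Ss invS t])
  finally have num: "measure M (A \<inter> B) \<le> exp (- (1 / matrix_inv R $ None $ None) * t\<^sup>2 / 32) * (1 - p)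
        + exp (- t\<^sup>2 / 2 - (1 / matrix_inv R $ None $ None) * t\<^sup>2 / 4)" using NS by simp
  have "cond_prob M A B = measure M (A \<inter> B) / (1 - p)" by (simp add: cond_prob_def PB)
  also have "\<dots> \<le> (exp (- (1 / matrix_inv R $ None $ None) * t\<^sup>2 / 32) * (1 - p)
        + exp (- t\<^sup>2 / 2 - (1 / matrix_inv R $ None $ None) * t\<^sup>2 / 4)) / (1 - p)"
    using num p by (intro divide_right_mono) auto
  also have "\<dots> = exp (- (1 / matrix_inv R $ None $ None) * t\<^sup>2 / 32)
        + exp (- t\<^sup>2 / 2 - (1 / matrix_inv R $ None $ None) * t\<^sup>2 / 4) / (1 - p)"
    using p by (simp add: add_divide_distrib)
  finally show ?thesis by (simp add: A_def B_def yp_def c_def)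
qed

end


theorem corollary2:
  fixes M :: "'a measure" and Y :: "'a \<Rightarrow> real" and X :: "'a \<Rightarrow> real ^'d"
    and R :: "real ^('d option) ^('d option)"
  assumes "prob_space M"
    and "Y \<in> borel_measurable M" and "X \<in> borel_measurable M"
    and "continuous_on UNIV (cdf_rv M Y)"
    and "\<And>i. continuous_on UNIV (cdf_rv M (\<lambda>\<omega>. X \<omega> $ i))"
    and "correlation_matrix R" and "invertible R"
    and "has_gaussian_copula M Y X R"
  shows "lambda_opt M Y X = 0"
proof -
  note ctx = assms(1,2,3,4,5,8)
  let ?cp = "\<lambda>p g. cond_prob M {\<omega> \<in> space M. Y \<omega> > gen_inv (cdf_rv M Y) p}
        {\<omega> \<in> space M. g (X \<omega>) > gen_inv (cdf_rv M (\<lambda>\<omega>. g (X \<omega>))) p}"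
  let ?f = "\<lambda>p. SUP g \<in> class_C M X p. ereal (?cp p g)"
  have lo: "0 \<le> lambda_opt M Y X"
    unfolding lambda_opt_def
  proof (rule le_Limsup)
    show "at_left (1::real) \<noteq> bot" by simp
    have ev0: "\<forall>\<^sub>F p in at_left (1::real). p \<in> {0<..<1}" by (rule eventually_at_left_real) simp
    show "\<forall>\<^sub>F p in at_left 1. 0 \<le> ?f p"
      using ev0
    proof (rule eventually_mono)
      fix p :: real assume p: "p \<in> {0<..<1}"
      let ?g = "\<lambda>x::real^'d. x $ undefined"
      have "?g \<in> class_C M X p" using class_C_nonempty[OF ctx] p by auto
      moreover have "0 \<le> ?cp p ?g" by (simp add: cond_prob_def)
      ultimately show "0 \<le> ?f p" by (intro SUP_upper2[of ?g]) auto
    qed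
  qed
  have sym: "transpose R = R" and psd: "\<And>v. 0 \<le> v \<bullet> (R *v v)" and diag: "R $ None $ None = 1"
    using assms(6) by (auto simp: correlation_matrix_def)
  define b where "b = 1 / matrix_inv R $ None $ None"
  have b0: "b > 0" using a_ge1[OF sym assms(7) psd diag] by (simp add: b_def)
  have up: "lambda_opt M Y X \<le> 0"
  proof (rule ereal_le_epsilon2)
    fix e :: real assume e: "e > 0"
    define H where "H t = exp (- b * t\<^sup>2 / 32) + sqrt (2 * pi) * exp (- b * t\<^sup>2 / 4 + t + 1 / 2)" for t
    have "(H \<longlongrightarrow> 0) at_top" unfolding H_def using b0 by real_asymp
    from order_tendstoD(2)[OF this e] have "\<forall>\<^sub>F t in at_top. H t < e \<and> t \<ge> 1"
      by (intro eventually_conj) (auto simp: eventually_ge_at_top)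
    then obtain K where K: "\<And>t. t \<ge> K \<Longrightarrow> H t < e \<and> t \<ge> 1"
      by (auto simp: eventually_at_top_linorder)
    have "\<forall>\<^sub>F p in at_left 1. ?f p \<le> ereal e"
      using eventually_at_left_real[OF Phi_lt1[of K]]
    proof (rule eventually_mono)
      fix p assume p: "p \<in> {std_normal_cdf K<..<1}"
      have p0: "0 < p" "p < 1" using p Phi_pos[of K] by auto
      obtain t where tp: "std_normal_cdf t = p" using Phi_surj[OF ctx p0] by blast
      have "t > K"
      proof (rule ccontr)
        assume "\<not> t > K"
        then have "std_normal_cdf t \<le> std_normal_cdf K" using Phi_mono by simp
        then show False using p tp by simp
      qed
      then have Ht: "H t < e" "t \<ge> 1" using K by auto
      have tail: "1 - p \<ge> std_normal_density (t + 1)" using Phi_tail[of t] Ht tp by simp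
      have dpos: "std_normal_density (t + 1) > 0" by (simp add: std_normal_density_def)
      have q: "exp (- t\<^sup>2 / 2 - b * t\<^sup>2 / 4) / std_normal_density (t + 1)
           = sqrt (2 * pi) * exp (- b * t\<^sup>2 / 4 + t + 1 / 2)"
      proof -
        have eq: "- b * t\<^sup>2 / 4 + t + 1 / 2 = (- t\<^sup>2 / 2 - b * t\<^sup>2 / 4) - (- (t + 1)\<^sup>2 / 2)"
          by (simp add: power2_eq_square field_simps)
        have "exp (- b * t\<^sup>2 / 4 + t + 1 / 2) = exp (- t\<^sup>2 / 2 - b * t\<^sup>2 / 4) / exp (- (t + 1)\<^sup>2 / 2)"
          unfolding eq by (rule exp_diff)
        then show ?thesis by (simp add: std_normal_density_def)
      qed
      show "?f p \<le> ereal e"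
      proof (rule SUP_least)
        fix g assume g: "g \<in> class_C M X p"
        have "?cp p g \<le> exp (- b * t\<^sup>2 / 32) + exp (- t\<^sup>2 / 2 - b * t\<^sup>2 / 4) / (1 - p)"
          using key[OF ctx assms(6,7) p0 tp _ g] Ht by (simp add: b_def)
        also have "exp (- t\<^sup>2 / 2 - b * t\<^sup>2 / 4) / (1 - p) \<le> exp (- t\<^sup>2 / 2 - b * t\<^sup>2 / 4) / std_normal_density (t + 1)"
          using tail dpos by (intro divide_left_mono) auto
        also have "exp (- b * t\<^sup>2 / 32) + \<dots> = H t" by (simp only: q H_def)
        finally show "ereal (?cp p g) \<le> ereal e" using Ht by simp
      qed
    qed
    then have "lambda_opt M Y X \<le> ereal e" unfolding lambda_opt_def by (rule Limsup_bounded)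
    then show "lambda_opt M Y X \<le> 0 + ereal e" by simp
  qed
  show ?thesis using lo up by simp
qed


end
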